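(* Let $N\ge 2$ and $A,B,C>0$ with $B>(N-1)C$. Let $a_N=A$, $b_N=B$, $c_N=C$ and for $2\le n\le N$ let $a_{n-1}=a_n(1+c_n/b_n)$, $b_{n-1}=b_n(1-c_n^2/b_n^2)$, $c_{n-1}=c_n(1+c_n/b_n)$. Define $$\gamma=\frac{C}{(B-(N-1)C)(B+C)},\qquad \alpha=\gamma A\Big(\frac{B}{C}+1\Big),\qquad \beta=\gamma\Big(\frac{B}{C}-(N-2)\Big).$$ Then for $1\le n\le N$, $$a_n=\frac{\alpha}{\beta+(n-1)\gamma},\qquad b_n=\frac{\beta+(n-2)\gamma}{(\beta+(n-1)\gamma)(\beta-\gamma)},\qquad c_n=\frac{\gamma}{(\beta+(n-1)\gamma)(\beta-\gamma)}.$$ *)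

theory Defs
  imports Complex_Main
begin

end

theory Submission
  imports Defs
begin

lemma step_alg:
  fixes g bt al D an bn cn :: real
  assumes g: "g > 0" and bt: "bt > g" and D: "D > 0"
    and a: "an = al / (D + g)"
    and b: "bn = D / ((D + g) * (bt - g))"
    and c: "cn = g / ((D + g) * (bt - g))"
  shows "an * (1 + cn / bn) = al / D"
    and "bn * (1 - cn\<^sup>2 / bn\<^sup>2) = (D - g) / (D * (bt - g))"
    and "cn * (1 + cn / bn) = g / (D * (bt - g))"
proof -
  have E: "bt - g > 0" using bt by simp
  define X where "X = (D + g) * (bt - g)"
  have X0: "X > 0" unfolding X_def using E D g by simp
  have "cn / bn = (g / X) / (D / X)" using b c unfolding X_def by simp
  also have "\<dots> = g / D" using X0 by simp
  finally have r: "cn / bn = g / D" .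
  have o: "1 + g / D = (D + g) / D" using D by (simp add: field_simps)
  have Dg: "D + g \<noteq> 0" using D g by simp
  have ro: "1 + cn / bn = (D + g) / D" using r o by simp
  show "an * (1 + cn / bn) = al / D" unfolding ro a using Dg by simp
  have k: "g / ((D + g) * (bt - g)) * ((D + g) / D) = g / (D * (bt - g))"
  proof -
    have "D \<noteq> 0" "bt - g \<noteq> 0" using D E by auto
    then have "g / ((D + g) * (bt - g)) * ((D + g) / D) = (g / (D * (bt - g))) * ((D + g) / (D + g))"
      by (simp add: mult.commute mult.left_commute)
    then show ?thesis using Dg by simp
  qed
  show "cn * (1 + cn / bn) = g / (D * (bt - g))" unfolding ro using k by (simp only: c)
  have "cn\<^sup>2 / bn\<^sup>2 = (g/D)^2" by (metis r power_divide)
  moreover have "1 - (g/D)^2 = ((D-g)*(D+g))/(D*D)" using D by (simp add: field_simps power2_eq_square)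
  moreover have "D / ((D + g) * (bt - g)) * (((D-g)*(D+g))/(D*D)) = (D - g) / (D * (bt - g))"
  proof -
    have n: "D \<noteq> 0" "bt - g \<noteq> 0" using D E by auto
    have "D / ((D + g) * (bt - g)) * (((D-g)*(D+g))/(D*D)) = ((D - g) / (D * (bt - g))) * (D / D) * ((D+g)/(D+g))"
      by (simp add: mult_ac)
    then show ?thesis using n Dg by simp
  qed
  ultimately show "bn * (1 - cn\<^sup>2 / bn\<^sup>2) = (D - g) / (D * (bt - g))"
    using b by simp
qed

theorem proposition2p5:
  fixes N :: nat and A B C :: real and a b c :: "nat \<Rightarrow> real"
  assumes hN: "N \<ge> 2"
    and hA: "A > 0" and hB: "B > 0" and hC: "C > 0"
    and hBC: "B > (real N - 1) * C"
    and haN: "a N = A" and hbN: "b N = B" and hcN: "c N = C"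
    and ha: "\<And>n. 2 \<le> n \<Longrightarrow> n \<le> N \<Longrightarrow> a (n - 1) = a n * (1 + c n / b n)"
    and hb: "\<And>n. 2 \<le> n \<Longrightarrow> n \<le> N \<Longrightarrow> b (n - 1) = b n * (1 - (c n)\<^sup>2 / (b n)\<^sup>2)"
    and hc: "\<And>n. 2 \<le> n \<Longrightarrow> n \<le> N \<Longrightarrow> c (n - 1) = c n * (1 + c n / b n)"
  shows "let \<gamma> = C / ((B - (real N - 1) * C) * (B + C));
             \<alpha> = \<gamma> * A * (B / C + 1);
             \<beta> = \<gamma> * (B / C - (real N - 2))
         in \<forall>n. 1 \<le> n \<and> n \<le> N \<longrightarrow>
              a n = \<alpha> / (\<beta> + (real n - 1) * \<gamma>) \<and>
              b n = (\<beta> + (real n - 2) * \<gamma>) / ((\<beta> + (real n - 1) * \<gamma>) * (\<beta> - \<gamma>)) \<and>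
              c n = \<gamma> / ((\<beta> + (real n - 1) * \<gamma>) * (\<beta> - \<gamma>))"
proof -
  define g where "g = C / ((B - (real N - 1) * C) * (B + C))"
  define al where "al = g * A * (B / C + 1)"
  define bt where "bt = g * (B / C - (real N - 2))"
  have P: "B - (real N - 1) * C > 0" using hBC by simp
  have g0: "g > 0" unfolding g_def using P hB hC by simp
  have btg: "bt - g = 1 / (B + C)"
  proof -
    define p where "p = B - (real N - 1) * C"
    have p0: "p > 0" using P p_def by simp
    have q: "B * p + C * p \<noteq> 0" using p0 hB hC by (metis add_pos_pos distrib_right mult_pos_pos less_irrefl)
    have "bt - g = g * ((B - (real N - 1) * C) / C)" unfolding bt_def using hC by (simp add: field_simps)
    also have "\<dots> = C / (p * (B + C)) * (p / C)" unfolding g_def p_def[symmetric] ..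
    also have "\<dots> = 1 / (B + C)" using p0 hB hC q by (simp add: field_simps)
    finally show ?thesis .
  qed
  have "1 / (B + C) > 0" using hB hC by simp
  then have btg0: "bt > g" using btg by linarith
  define Q where "Q n \<longleftrightarrow> a n = al / (bt + (real n - 1) * g) \<and>
              b n = (bt + (real n - 2) * g) / ((bt + (real n - 1) * g) * (bt - g)) \<and>
              c n = g / ((bt + (real n - 1) * g) * (bt - g))" for n
  have DN: "bt + (real N - 1) * g = 1 / (B - (real N - 1) * C)"
  proof -
    define p where "p = B - (real N - 1) * C"
    have p0: "p > 0" using P p_def by simp
    have q2: "B * (C * p) + C * (C * p) \<noteq> 0"
    proof -
      have "(B + C) * (C * p) > 0" using p0 hB hC by simp
      moreover have "B * (C * p) + C * (C * p) = (B + C) * (C * p)" by algebra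
      ultimately show ?thesis by linarith
    qed
    have "bt + (real N - 1) * g = g * (B / C + 1)" unfolding bt_def by (simp add: algebra_simps)
    also have "\<dots> = C / (p * (B + C)) * ((B + C) / C)" unfolding g_def p_def[symmetric]
      using hC by (simp add: field_simps)
    also have "\<dots> = 1 / p" using p0 hB hC q2 by (simp add: field_simps)
    finally show ?thesis unfolding p_def .
  qed
  have QN: "Q N"
  proof -
    define p where "p = B - (real N - 1) * C"
    have p0: "p > 0" using P p_def by simp
    have gp: "g = C / (p * (B + C))" unfolding g_def p_def ..
    have DN': "bt + (real N - 1) * g = 1 / p" using DN p_def by simp
    have nz: "B + C \<noteq> 0" "p \<noteq> 0" using p0 hB hC by auto
    have ee: "1/p - C / (p * (B + C)) = B / (p * (B + C))"
    proof -
      have h1: "1/p = (B + C) / (p * (B + C))" using nz by simp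
      have "((B + C) - C) / (p * (B + C)) = (B + C) / (p * (B + C)) - C / (p * (B + C))"
        by (rule diff_divide_distrib)
      then show ?thesis using h1 by simp
    qed
    have e: "bt + (real N - 2) * g = B / (p * (B + C))"
    proof -
      have "bt + (real N - 2) * g = bt + (real N - 1) * g - g" by (simp add: algebra_simps)
      also have "\<dots> = 1/p - C / (p * (B + C))" using DN' gp by simp
      also have "\<dots> = B / (p * (B + C))" using ee by simp
      finally show ?thesis .
    qed
    have alp: "al = A / p"
    proof -
      have C0: "C \<noteq> 0" using hC by simp
      have "B / C + 1 = (B + C) / C" using C0 by (simp add: field_simps)
      then have "al = C / (p * (B + C)) * A * ((B + C) / C)" unfolding al_def gp by simp
      also have "\<dots> = (A / p) * (C / C) * ((B + C) / (B + C))" by (simp add: mult_ac)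
      also have "\<dots> = A / p" using C0 nz by simp
      finally show ?thesis .
    qed
    have X: "p * (B + C) \<noteq> 0" using nz by simp
    have m: "1 / p * (1 / (B + C)) = 1 / (p * (B + C))" by simp
    have "a N = al / (bt + (real N - 1) * g)" unfolding DN' alp haN using nz by simp
    moreover have "b N = (bt + (real N - 2) * g) / ((bt + (real N - 1) * g) * (bt - g))"
      unfolding e DN' btg m hbN using X by simp
    moreover have "c N = g / ((bt + (real N - 1) * g) * (bt - g))"
    proof -
      have "g / ((bt + (real N - 1) * g) * (bt - g)) = g / (1 / (p * (B + C)))"
        by (simp only: DN' btg m)
      also have "\<dots> = C" unfolding gp using X by simp
      finally show ?thesis using hcN by simp
    qed
    ultimately show ?thesis unfolding Q_def by blast
  qed
  have stepQ: "Q (n - 1)" if "2 \<le> n" "n \<le> N" "Q n" for n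
  proof -
    define D where "D = bt + (real n - 2) * g"
    have D0: "D > 0"
    proof -
      have "real n - 2 \<ge> 0" using that by simp
      then have "(real n - 2) * g \<ge> 0" using g0 by simp
      then show ?thesis unfolding D_def using btg0 g0 by linarith
    qed
    have e1: "bt + (real n - 1) * g = D + g" unfolding D_def by (simp add: algebra_simps)
    have rn: "real (n - 1) = real n - 1" using that by simp
    have e2: "bt + (real (n - 1) - 1) * g = D" unfolding D_def rn by (simp add: algebra_simps)
    have e3: "bt + (real (n - 1) - 2) * g = D - g" unfolding D_def rn by (simp add: algebra_simps)
    have qa: "a n = al / (D + g)" "b n = D / ((D + g) * (bt - g))" "c n = g / ((D + g) * (bt - g))"
      using \<open>Q n\<close> unfolding Q_def e1 D_def by auto
    note s = step_alg[OF g0 btg0 D0 qa]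
    show ?thesis unfolding Q_def e2 e3 using s ha[OF that(1,2)] hb[OF that(1,2)] hc[OF that(1,2)]
      by simp
  qed
  have all: "\<forall>k. k \<le> N - 1 \<longrightarrow> Q (N - k)"
  proof
    fix k show "k \<le> N - 1 \<longrightarrow> Q (N - k)"
    proof (induction k)
      case 0 then show ?case using QN by simp
    next
      case (Suc k)
      show ?case
      proof
        assume h: "Suc k \<le> N - 1"
        have "Q (N - k)" using Suc h by simp
        then have "Q (N - k - 1)" using stepQ[of "N - k"] h by simp
        moreover have eq: "N - Suc k = N - k - 1" by simp
        ultimately show "Q (N - Suc k)" by (simp only: eq)
      qed
    qed
  qed
  have "\<forall>n. 1 \<le> n \<and> n \<le> N \<longrightarrow> Q n"
  proof (intro allI impI)
    fix n assume h: "1 \<le> n \<and> n \<le> N"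
    then have "N - n \<le> N - 1" by arith
    then have "Q (N - (N - n))" using all by blast
    then show "Q n" using h by simp
  qed
  then have "\<forall>n. 1 \<le> n \<and> n \<le> N \<longrightarrow> a n = al / (bt + (real n - 1) * g) \<and>
              b n = (bt + (real n - 2) * g) / ((bt + (real n - 1) * g) * (bt - g)) \<and>
              c n = g / ((bt + (real n - 1) * g) * (bt - g))" unfolding Q_def .
  then show ?thesis unfolding Let_def g_def[symmetric] al_def[symmetric] bt_def[symmetric] .
qed

end
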